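(* Let $\Gamma$ be a discrete group. The global $L^2$-character map induces a map $\operatorname{ch}^\Gamma\otimes_{\mathbb Z}\mathbb Q:A(\Gamma)\otimes_{\mathbb Z}\mathbb Q\to\prod_{(K)}\mathbb Q$ which is injective. If $\Gamma$ has only finitely many conjugacy classes of finite subgroups, it is bijective.
   Context: The Burnside group $A(\Gamma)$ is the Grothendieck group of the monoid (under disjoint union) of isomorphism classes of proper cocompact $\Gamma$-sets (all isotropy groups finite, finitely many orbits); it is free abelian on $[\Gamma/H]$, $H$ running over conjugacy classes of finite subgroups. For a finite subgroup $K$, with $WK=N_\Gamma K/K$, $\operatorname{ch}^\Gamma_K:A(\Gamma)\to\mathbb Q$ sends $[S]$ to $\sum_{i=1}^r|L_i|^{-1}$, where $WK/L_1,\dots,WK/L_r$ are the $WK$-orbits of $S^K$. The global $L^2$-character map is $\operatorname{ch}^\Gamma=\prod_{(K)}\operatorname{ch}^\Gamma_K:A(\Gamma)\to\prod_{(K)}\mathbb Q$, $(K)$ ranging over conjugacy classes of finite subgroups of $\Gamma$. *)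

theory Defs
  imports "HOL-Algebra.Group_Action" "HOL-Algebra.Left_Coset" Complex_Main
begin

definition fixset :: "'b set \<Rightarrow> ('a \<Rightarrow> 'b \<Rightarrow> 'b) \<Rightarrow> 'a set \<Rightarrow> 'b set" where
  "fixset E \<phi> K = {s \<in> E. \<forall>k\<in>K. \<phi> k s = s}"

definition weyl :: "('a, 'c) monoid_scheme \<Rightarrow> 'a set \<Rightarrow> 'a set monoid" where
  "weyl G K = (G\<lparr>carrier := normalizer G K\<rparr>) Mod K"

definition weyl_act :: "('a \<Rightarrow> 'b \<Rightarrow> 'b) \<Rightarrow> 'a set \<Rightarrow> 'b \<Rightarrow> 'b" where
  "weyl_act \<phi> C = \<phi> (SOME n. n \<in> C)"

definition chK :: "('a, 'c) monoid_scheme \<Rightarrow> 'a set \<Rightarrow> 'b set \<Rightarrow> ('a \<Rightarrow> 'b \<Rightarrow> 'b) \<Rightarrow> rat" where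
  "chK G K E \<phi> =
     (\<Sum>Orb \<in> orbits (weyl G K) (fixset E \<phi> K) (weyl_act \<phi>).
        1 / of_nat (card (stabilizer (weyl G K) (weyl_act \<phi>) (SOME s. s \<in> Orb))))"

definition ch_hom :: "('a, 'c) monoid_scheme \<Rightarrow> 'a set \<Rightarrow> 'a set \<Rightarrow> rat" where
  "ch_hom G K H = chK G K (lcosets\<^bsub>G\<^esub> H) (\<lambda>g C. g <#\<^bsub>G\<^esub> C)"

definition conjclass :: "('a, 'c) monoid_scheme \<Rightarrow> 'a set \<Rightarrow> 'a set set" where
  "conjclass G H = {g <#\<^bsub>G\<^esub> H #>\<^bsub>G\<^esub> inv\<^bsub>G\<^esub> g | g. g \<in> carrier G}"

definition fin_classes :: "('a, 'c) monoid_scheme \<Rightarrow> 'a set set set" where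
  "fin_classes G = {conjclass G H | H. subgroup H G \<and> finite H}"

text \<open>A(G) \<otimes> Q: A(G) is free abelian on the classes [G/H], so A(G) \<otimes> Q is the
  Q-vector space of finitely supported rational functions on fin_classes G.\<close>
definition burnside_Q :: "('a, 'c) monoid_scheme \<Rightarrow> ('a set set \<Rightarrow> rat) set" where
  "burnside_Q G = {x. finite {c. x c \<noteq> 0} \<and> (\<forall>c. c \<notin> fin_classes G \<longrightarrow> x c = 0)}"

definition prod_Q :: "('a, 'c) monoid_scheme \<Rightarrow> ('a set set \<Rightarrow> rat) set" where
  "prod_Q G = {y. \<forall>c. c \<notin> fin_classes G \<longrightarrow> y c = 0}"

text \<open>ch^G \<otimes> Q: the Q-linear extension of [G/H] \<mapsto> (ch_K[G/H])_(K).\<close>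
definition chQ :: "('a, 'c) monoid_scheme \<Rightarrow> ('a set set \<Rightarrow> rat) \<Rightarrow> ('a set set \<Rightarrow> rat)" where
  "chQ G x = (\<lambda>c. if c \<in> fin_classes G then
      (\<Sum>d \<in> {d. x d \<noteq> 0}. x d * ch_hom G (SOME K. K \<in> c) (SOME H. H \<in> d))
    else 0)"

end

theory Submission
  imports Defs
begin


lemma tri_inj:
  fixes M :: "'x \<Rightarrow> 'x \<Rightarrow> rat" and w :: "'x \<Rightarrow> nat"
  assumes fin: "finite S" and SF: "S \<subseteq> F"
    and tri: "\<And>c d. c \<in> F \<Longrightarrow> d \<in> F \<Longrightarrow> c \<noteq> d \<Longrightarrow> M c d \<noteq> 0 \<Longrightarrow> w c < w d"
    and diag: "\<And>c. c \<in> F \<Longrightarrow> M c c \<noteq> 0"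
    and eq: "\<And>c. c \<in> F \<Longrightarrow> (\<Sum>d\<in>S. z d * M c d) = 0"
  shows "\<forall>d\<in>S. z d = 0"
proof (rule ccontr)
  assume "\<not> (\<forall>d\<in>S. z d = 0)"
  define T where "T = {d\<in>S. z d \<noteq> 0}"
  have Tne: "T \<noteq> {}" and Tfin: "finite T" using \<open>\<not> _\<close> fin by (auto simp: T_def)
  have "Max (w ` T) \<in> w ` T" using Tne Tfin by simp
  then obtain d0 where d0: "d0 \<in> T" "w d0 = Max (w ` T)" by auto
  have d0max: "\<And>d. d \<in> T \<Longrightarrow> w d \<le> w d0" using d0 Tfin by simp
  have d0S: "d0 \<in> S" and zd0: "z d0 \<noteq> 0" using d0 by (auto simp: T_def)
  have "(\<Sum>d\<in>S. z d * M d0 d) = z d0 * M d0 d0 + (\<Sum>d\<in>S-{d0}. z d * M d0 d)"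
    using fin d0S by (simp add: sum.remove)
  also have "(\<Sum>d\<in>S-{d0}. z d * M d0 d) = 0"
  proof (rule sum.neutral, rule ballI)
    fix d assume d: "d \<in> S - {d0}"
    show "z d * M d0 d = 0"
    proof (rule ccontr)
      assume "z d * M d0 d \<noteq> 0"
      hence "z d \<noteq> 0" "M d0 d \<noteq> 0" by auto
      hence "w d0 < w d" using tri[of d0 d] d d0S SF by auto
      moreover have "d \<in> T" using d \<open>z d \<noteq> 0\<close> by (auto simp: T_def)
      ultimately show False using d0max by fastforce
    qed
  qed
  finally have "(\<Sum>d\<in>S. z d * M d0 d) = z d0 * M d0 d0" by simp
  moreover have "z d0 * M d0 d0 \<noteq> 0" using zd0 diag[of d0] d0S SF by auto
  ultimately show False using eq[of d0] d0S SF by auto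
qed

lemma tri_surj:
  fixes M :: "'x \<Rightarrow> 'x \<Rightarrow> rat" and w :: "'x \<Rightarrow> nat"
  assumes fin: "finite F"
    and tri: "\<And>c d. c \<in> F \<Longrightarrow> d \<in> F \<Longrightarrow> c \<noteq> d \<Longrightarrow> M c d \<noteq> 0 \<Longrightarrow> w c < w d"
    and diag: "\<And>c. c \<in> F \<Longrightarrow> M c c \<noteq> 0"
  shows "\<exists>x. (\<forall>d. d \<notin> F \<longrightarrow> x d = 0) \<and> (\<forall>c\<in>F. (\<Sum>d\<in>F. x d * M c d) = y c)"
  using fin tri diag
proof (induction F rule: finite_psubset_induct)
  case (psubset F)
  show ?case
  proof (cases "F = {}")
    case True thus ?thesis by (intro exI[of _ "\<lambda>_. 0"]) auto
  next
    case False
    have "Min (w ` F) \<in> w ` F" using False psubset.hyps by simp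
    then obtain m where m: "m \<in> F" "w m = Min (w ` F)" by auto
    have mmin: "\<And>c. c \<in> F \<Longrightarrow> w m \<le> w c" using m psubset.hyps by simp
    define F' where "F' = F - {m}"
    have "F' \<subset> F" using m by (auto simp: F'_def)
    then obtain x' where x': "\<forall>d. d \<notin> F' \<longrightarrow> x' d = 0" "\<forall>c\<in>F'. (\<Sum>d\<in>F'. x' d * M c d) = y c"
      using psubset.IH[of F'] psubset.prems by (auto simp: F'_def)
    have Mcm: "\<And>c. c \<in> F' \<Longrightarrow> M c m = 0"
    proof (rule ccontr)
      fix c assume c: "c \<in> F'" "M c m \<noteq> 0"
      hence "w c < w m" using psubset.prems(1)[of c m] m by (auto simp: F'_def)
      thus False using mmin[of c] c by (auto simp: F'_def)
    qed
    define x where "x = x'(m := (y m - (\<Sum>d\<in>F'. x' d * M m d)) / M m m)"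
    have finF': "finite F'" using psubset.hyps by (simp add: F'_def)
    have split: "\<And>c. (\<Sum>d\<in>F. x d * M c d) = x m * M c m + (\<Sum>d\<in>F'. x' d * M c d)"
    proof -
      fix c
      have "(\<Sum>d\<in>F. x d * M c d) = x m * M c m + (\<Sum>d\<in>F'. x d * M c d)"
        using psubset.hyps m by (simp add: F'_def sum.remove)
      also have "(\<Sum>d\<in>F'. x d * M c d) = (\<Sum>d\<in>F'. x' d * M c d)"
        by (rule sum.cong) (auto simp: x_def F'_def)
      finally show "?thesis c" .
    qed
    show ?thesis
    proof (intro exI[of _ x] conjI allI impI ballI)
      fix d assume "d \<notin> F" thus "x d = 0" using x' m by (auto simp: x_def F'_def)
    next
      fix c assume c: "c \<in> F"
      show "(\<Sum>d\<in>F. x d * M c d) = y c"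
      proof (cases "c = m")
        case True
        have "M m m \<noteq> 0" using psubset.prems(2) m by auto
        thus ?thesis using True split[of m] by (simp add: x_def)
      next
        case False
        hence "c \<in> F'" using c by (simp add: F'_def)
        thus ?thesis using split[of c] Mcm x' by simp
      qed
    qed
  qed
qed



context group begin

lemma conj_img: "H \<subseteq> carrier G \<Longrightarrow> g \<in> carrier G \<Longrightarrow> g <# H #> inv g = (\<lambda>h. g \<otimes> h \<otimes> inv g) ` H"
  by (auto simp: l_coset_def r_coset_def)

lemma conj_cancel: "a \<in> carrier G \<Longrightarrow> k \<in> carrier G \<Longrightarrow> inv a \<otimes> (a \<otimes> k \<otimes> inv a) \<otimes> a = k"
  by (simp add: m_assoc) (simp add: m_assoc[symmetric])

lemma conj_cancel2: "a \<in> carrier G \<Longrightarrow> k \<in> carrier G \<Longrightarrow> a \<otimes> (inv a \<otimes> k \<otimes> a) \<otimes> inv a = k"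
  by (simp add: m_assoc) (simp add: m_assoc[symmetric])

lemma conj_inj: "inj_on (\<lambda>k. a \<otimes> k \<otimes> inv a) K" if "K \<subseteq> carrier G" "a \<in> carrier G"
proof (rule inj_onI)
  fix x y assume xy: "x \<in> K" "y \<in> K" "a \<otimes> x \<otimes> inv a = a \<otimes> y \<otimes> inv a"
  hence "a \<otimes> x = a \<otimes> y" using that by (metis inv_closed m_closed right_cancel subsetD)
  thus "x = y" using that xy by (metis Units_eq Units_l_cancel subsetD)
qed

lemma conjclass_img: "H \<subseteq> carrier G \<Longrightarrow>
   conjclass G H = {(\<lambda>h. g \<otimes> h \<otimes> inv g) ` H | g. g \<in> carrier G}"
  unfolding conjclass_def using conj_img by blast

lemma conjclass_conj:
  assumes H: "H \<subseteq> carrier G" and g: "g \<in> carrier G"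
  shows "conjclass G ((\<lambda>h. g \<otimes> h \<otimes> inv g) ` H) = conjclass G H"
proof -
  have H': "(\<lambda>h. g \<otimes> h \<otimes> inv g) ` H \<subseteq> carrier G" using H g by auto
  have comp: "(\<lambda>h. x \<otimes> h \<otimes> inv x) ` ((\<lambda>h. g \<otimes> h \<otimes> inv g) ` H)
      = (\<lambda>h. (x \<otimes> g) \<otimes> h \<otimes> inv (x \<otimes> g)) ` H" if x: "x \<in> carrier G" for x
    unfolding image_image
    apply (rule image_cong[OF refl])
    using x g H by (auto simp: m_assoc inv_mult_group)
  show ?thesis
    unfolding conjclass_img[OF H'] conjclass_img[OF H]
  proof (intro equalityI subsetI)
    fix C assume "C \<in> {(\<lambda>h. x \<otimes> h \<otimes> inv x) ` ((\<lambda>h. g \<otimes> h \<otimes> inv g) ` H) |x. x \<in> carrier G}"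
    then obtain x where "x \<in> carrier G" "C = (\<lambda>h. x \<otimes> h \<otimes> inv x) ` ((\<lambda>h. g \<otimes> h \<otimes> inv g) ` H)" by auto
    thus "C \<in> {(\<lambda>h. y \<otimes> h \<otimes> inv y) ` H |y. y \<in> carrier G}" using comp g by auto
  next
    fix C assume "C \<in> {(\<lambda>h. y \<otimes> h \<otimes> inv y) ` H |y. y \<in> carrier G}"
    then obtain y where y: "y \<in> carrier G" "C = (\<lambda>h. y \<otimes> h \<otimes> inv y) ` H" by auto
    have "C = (\<lambda>h. (y \<otimes> inv g) \<otimes> h \<otimes> inv (y \<otimes> inv g)) ` ((\<lambda>h. g \<otimes> h \<otimes> inv g) ` H)"
      using comp[of "y \<otimes> inv g"] y g by (simp add: m_assoc)
    thus "C \<in> {(\<lambda>h. x \<otimes> h \<otimes> inv x) ` ((\<lambda>h. g \<otimes> h \<otimes> inv g) ` H) |x. x \<in> carrier G}"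
      using y g by blast
  qed
qed

lemma fin_classes_rep:
  assumes "c \<in> fin_classes G"
  shows "(SOME K. K \<in> c) \<in> c \<and> subgroup (SOME K. K \<in> c) G \<and> finite (SOME K. K \<in> c)
     \<and> c = conjclass G (SOME K. K \<in> c)"
proof -
  obtain H where H: "c = conjclass G H" "subgroup H G" "finite H"
    using assms by (auto simp: fin_classes_def)
  have Hc: "H \<subseteq> carrier G" using H subgroup.subset by blast
  have "H = (\<lambda>h. \<one> \<otimes> h \<otimes> inv \<one>) ` H" using Hc by (force simp: image_def)
  hence "H \<in> c" using H(1) conjclass_img[OF Hc] by blast
  hence "(SOME K. K \<in> c) \<in> c" by (rule someI)
  then obtain g where g: "g \<in> carrier G" "(SOME K. K \<in> c) = (\<lambda>h. g \<otimes> h \<otimes> inv g) ` H"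
    using H(1) conjclass_img[OF Hc] by auto
  have "subgroup (SOME K. K \<in> c) G"
    using subgroup_conjugation_is_surj2[OF g(1) H(2)] conj_img[OF Hc g(1)] g(2) by simp
  thus ?thesis using \<open>(SOME K. K \<in> c) \<in> c\<close> g H conjclass_conj[OF Hc g(1)] by simp
qed

lemma lcos_eq_iff:
  assumes H: "subgroup H G" and x: "x \<in> carrier G" and y: "y \<in> carrier G"
  shows "(x <# H = y <# H) \<longleftrightarrow> inv x \<otimes> y \<in> H"
proof
  assume "x <# H = y <# H"
  hence "y \<in> x <# H" using lcos_self[OF y H] by simp
  then obtain h where "h \<in> H" "y = x \<otimes> h" by (auto simp: l_coset_def)
  thus "inv x \<otimes> y \<in> H" using x H subgroup.mem_carrier by (fastforce simp: m_assoc[symmetric])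
next
  assume "inv x \<otimes> y \<in> H"
  hence "y \<in> x <# H" using x y by (auto simp: l_coset_def m_assoc[symmetric] intro!: bexI[of _ "inv x \<otimes> y"])
  thus "x <# H = y <# H" using l_repr_independence[OF _ x H] by blast
qed

lemma fin_conj:
  assumes K: "subgroup K G" "finite K" and a: "a \<in> carrier G"
    and sub: "\<forall>k\<in>K. a \<otimes> k \<otimes> inv a \<in> K"
  shows "\<forall>k\<in>K. inv a \<otimes> k \<otimes> a \<in> K"
proof
  fix k assume k: "k \<in> K"
  have Kc: "K \<subseteq> carrier G" using K subgroup.subset by blast
  have inj: "inj_on (\<lambda>k. a \<otimes> k \<otimes> inv a) K"
    using conj_inj a Kc by blast
  have "(\<lambda>k. a \<otimes> k \<otimes> inv a) ` K = K" using endo_inj_surj[OF K(2) _ inj] sub by auto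
  then obtain k' where "k' \<in> K" "k = a \<otimes> k' \<otimes> inv a" using k by force
  thus "inv a \<otimes> k \<otimes> a \<in> K" using a Kc conj_cancel[of a k'] by auto
qed

lemma normalizer_iff:
  assumes K: "subgroup K G" "finite K"
  shows "n \<in> normalizer G K \<longleftrightarrow> n \<in> carrier G \<and> (\<forall>k\<in>K. n \<otimes> k \<otimes> inv n \<in> K)"
proof -
  have Kc: "K \<subseteq> carrier G" using K subgroup.subset by blast
  have "n \<in> normalizer G K \<longleftrightarrow> n \<in> carrier G \<and> (\<lambda>k. n \<otimes> k \<otimes> inv n) ` K = K"
    unfolding normalizer_def stabilizer_def using Kc conj_img[OF Kc] by auto
  moreover have "(\<lambda>k. n \<otimes> k \<otimes> inv n) ` K = K \<longleftrightarrow> (\<forall>k\<in>K. n \<otimes> k \<otimes> inv n \<in> K)" if n: "n \<in> carrier G"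
  proof
    assume "\<forall>k\<in>K. n \<otimes> k \<otimes> inv n \<in> K"
    moreover have "inj_on (\<lambda>k. n \<otimes> k \<otimes> inv n) K"
      using conj_inj n Kc by blast
    ultimately show "(\<lambda>k. n \<otimes> k \<otimes> inv n) ` K = K" using endo_inj_surj[OF K(2), of "\<lambda>k. n \<otimes> k \<otimes> inv n"] by auto
  qed auto
  ultimately show ?thesis by blast
qed

end



context group begin

lemma ch_nonzero_fix:
  assumes H: "subgroup H G" and K: "K \<subseteq> carrier G" and ne: "ch_hom G K H \<noteq> 0"
  shows "\<exists>a\<in>carrier G. \<forall>k\<in>K. inv a \<otimes> k \<otimes> a \<in> H"
proof -
  have Hc: "H \<subseteq> carrier G" using H subgroup.subset by blast
  have "fixset (lcosets H) (\<lambda>g C. g <# C) K \<noteq> {}"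
  proof
    assume "fixset (lcosets H) (\<lambda>g C. g <# C) K = {}"
    hence "ch_hom G K H = 0" unfolding ch_hom_def chK_def orbits_def by simp
    thus False using ne by simp
  qed
  then obtain s where s: "s \<in> lcosets H" "\<forall>k\<in>K. k <# s = s" by (auto simp: fixset_def)
  then obtain a where a: "a \<in> carrier G" "s = a <# H" by (auto simp: LCOSETS_def)
  have "\<forall>k\<in>K. inv a \<otimes> k \<otimes> a \<in> H"
  proof
    fix k assume k: "k \<in> K"
    hence kc: "k \<in> carrier G" using K by auto
    have "a <# H = (k \<otimes> a) <# H" using s(2) k a lcos_m_assoc[OF Hc kc a(1)] by simp
    hence "inv a \<otimes> (k \<otimes> a) \<in> H" using lcos_eq_iff[OF H a(1)] kc a by simp
    thus "inv a \<otimes> k \<otimes> a \<in> H" using kc a by (simp add: m_assoc)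
  qed
  thus ?thesis using a by blast
qed

lemma ch_self:
  assumes K: "subgroup K G" "finite K"
  shows "ch_hom G K K \<noteq> 0"
proof -
  define N where "N = normalizer G K"
  have Kc: "K \<subseteq> carrier G" using K subgroup.subset by blast
  have Nc: "\<And>n. n \<in> N \<Longrightarrow> n \<in> carrier G" using normalizer_iff[OF K] by (auto simp: N_def)
  have Nconj: "\<And>b k. b \<in> N \<Longrightarrow> k \<in> K \<Longrightarrow> b \<otimes> k \<otimes> inv b \<in> K"
    using normalizer_iff[OF K] by (auto simp: N_def)
  have Nconji: "\<And>b k. b \<in> N \<Longrightarrow> k \<in> K \<Longrightarrow> inv b \<otimes> k \<otimes> b \<in> K"
    using fin_conj[OF K] Nc Nconj by blast
  have Niff: "\<And>n. n \<in> N \<longleftrightarrow> n \<in> carrier G \<and> (\<forall>k\<in>K. n \<otimes> k \<otimes> inv n \<in> K)"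
    using normalizer_iff[OF K] by (auto simp: N_def)
  have Nmult: "\<And>a b. a \<in> N \<Longrightarrow> b \<in> N \<Longrightarrow> a \<otimes> b \<in> N"
  proof -
    fix a b assume ab: "a \<in> N" "b \<in> N"
    have "\<forall>k\<in>K. a \<otimes> b \<otimes> k \<otimes> inv (a \<otimes> b) \<in> K"
    proof
      fix k assume k: "k \<in> K"
      have "a \<otimes> b \<otimes> k \<otimes> inv (a \<otimes> b) = a \<otimes> (b \<otimes> k \<otimes> inv b) \<otimes> inv a"
      proof -
        have c: "a \<in> carrier G" "b \<in> carrier G" "k \<in> carrier G" using ab k Kc Nc by auto
        thus ?thesis by (simp add: m_assoc inv_mult_group)
      qed
      thus "a \<otimes> b \<otimes> k \<otimes> inv (a \<otimes> b) \<in> K" using Nconj ab k by simp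
    qed
    thus "a \<otimes> b \<in> N" using Niff Nc ab by simp
  qed
  have Ninv: "\<And>a. a \<in> N \<Longrightarrow> inv a \<in> N" using Niff Nconji Nc by simp
  have KN: "\<And>k. k \<in> K \<Longrightarrow> k \<in> N"
    using Niff Kc K(1) subgroup.m_closed subgroup.m_inv_closed by (metis subsetD)
  have oneN: "\<one> \<in> N" using KN K(1) subgroup.one_closed by blast
  have Wc: "carrier (weyl G K) = {K #> n | n. n \<in> N}"
    by (auto simp: weyl_def FactGroup_def RCOSETS_def r_coset_def N_def)
  have someC: "\<And>n. n \<in> N \<Longrightarrow> \<exists>k\<in>K. (SOME m. m \<in> K #> n) = k \<otimes> n"
  proof -
    fix n assume n: "n \<in> N"
    have "n \<in> K #> n" using n Nc K(1) by (auto simp: r_coset_def intro!: bexI[of _ \<one>] subgroup.one_closed)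
    hence "(SOME m. m \<in> K #> n) \<in> K #> n" by (rule someI)
    thus "\<exists>k\<in>K. (SOME m. m \<in> K #> n) = k \<otimes> n" by (auto simp: r_coset_def)
  qed
  define \<Omega> where "\<Omega> = {b <# K | b. b \<in> N}"
  define \<phi> where "\<phi> = (\<lambda>g C. g <# C)"
  have fix_eq: "fixset (lcosets K) \<phi> K = \<Omega>"
  proof (intro equalityI subsetI)
    fix s assume "s \<in> fixset (lcosets K) \<phi> K"
    hence s: "s \<in> lcosets K" "\<forall>k\<in>K. k <# s = s" by (auto simp: fixset_def \<phi>_def)
    then obtain a where a: "a \<in> carrier G" "s = a <# K" by (auto simp: LCOSETS_def)
    have "\<forall>k\<in>K. inv a \<otimes> k \<otimes> inv (inv a) \<in> K"
    proof
      fix k assume k: "k \<in> K"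
      hence kc: "k \<in> carrier G" using Kc by auto
      have "a <# K = (k \<otimes> a) <# K" using s(2) k a lcos_m_assoc[OF Kc kc a(1)] by simp
      hence "inv a \<otimes> (k \<otimes> a) \<in> K" using lcos_eq_iff[OF K(1) a(1)] kc a by simp
      thus "inv a \<otimes> k \<otimes> inv (inv a) \<in> K" using kc a by (simp add: m_assoc)
    qed
    hence "\<forall>k\<in>K. inv (inv a) \<otimes> k \<otimes> inv a \<in> K" using fin_conj[OF K, of "inv a"] a by simp
    hence "a \<in> N" using Niff a by simp
    thus "s \<in> \<Omega>" using a by (auto simp: \<Omega>_def)
  next
    fix s assume "s \<in> \<Omega>"
    then obtain b where b: "b \<in> N" "s = b <# K" by (auto simp: \<Omega>_def)
    have "s \<in> lcosets K" using b Nc by (auto simp: LCOSETS_def)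
    moreover have "\<forall>k\<in>K. k <# s = s"
    proof
      fix k assume k: "k \<in> K"
      hence kc: "k \<in> carrier G" using Kc by auto
      have "inv b \<otimes> (k \<otimes> b) \<in> K" using Nconji[OF b(1) k] kc Nc b by (simp add: m_assoc)
      hence "b <# K = (k \<otimes> b) <# K" using lcos_eq_iff[OF K(1)] kc Nc b by simp
      thus "k <# s = s" using b lcos_m_assoc[OF Kc kc Nc[OF b(1)]] by simp
    qed
    ultimately show "s \<in> fixset (lcosets K) \<phi> K" by (auto simp: fixset_def \<phi>_def)
  qed
  have orbit_eq: "orbit (weyl G K) (weyl_act \<phi>) s = \<Omega>" if s: "s \<in> \<Omega>" for s
  proof -
    obtain a where a: "a \<in> N" "s = a <# K" using s by (auto simp: \<Omega>_def)
    have ac: "a \<in> carrier G" using Nc a by simp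
    show ?thesis
    proof (intro equalityI subsetI)
      fix t assume "t \<in> orbit (weyl G K) (weyl_act \<phi>) s"
      then obtain n where n: "n \<in> N" "t = (SOME m. m \<in> K #> n) <# s"
        by (auto simp: orbit_def Wc weyl_act_def \<phi>_def)
      obtain k where k: "k \<in> K" "(SOME m. m \<in> K #> n) = k \<otimes> n" using someC[OF n(1)] by blast
      have "t = (k \<otimes> n \<otimes> a) <# K" using n k a lcos_m_assoc[OF Kc _ ac, of "k \<otimes> n"] Kc Nc by auto
      moreover have "k \<otimes> n \<otimes> a \<in> N" using Nmult KN k n a by simp
      ultimately show "t \<in> \<Omega>" by (auto simp: \<Omega>_def)
    next
      fix t assume "t \<in> \<Omega>"
      then obtain b where b: "b \<in> N" "t = b <# K" by (auto simp: \<Omega>_def)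
      have bc: "b \<in> carrier G" using Nc b by simp
      define n where "n = b \<otimes> inv a"
      have n: "n \<in> N" using Nmult Ninv a b by (simp add: n_def)
      obtain k where k: "k \<in> K" "(SOME m. m \<in> K #> n) = k \<otimes> n" using someC[OF n] by blast
      have kc: "k \<in> carrier G" using k Kc by auto
      have "(SOME m. m \<in> K #> n) <# s = (k \<otimes> b) <# K"
        using k a lcos_m_assoc[OF Kc _ ac, of "k \<otimes> n"] kc ac bc by (simp add: n_def m_assoc)
      also have "\<dots> = b <# K"
      proof -
        have "inv b \<otimes> (k \<otimes> b) \<in> K" using Nconji[OF b(1) k(1)] kc bc by (simp add: m_assoc)
        thus ?thesis using lcos_eq_iff[OF K(1) bc, of "k \<otimes> b"] kc bc by (metis m_closed)
      qed
      finally have "t = weyl_act \<phi> (K #> n) s" using b by (simp add: weyl_act_def \<phi>_def)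
      thus "t \<in> orbit (weyl G K) (weyl_act \<phi>) s" using n by (auto simp: orbit_def Wc)
    qed
  qed
  have KOm: "K \<in> \<Omega>" using oneN lcos_mult_one[OF Kc] unfolding \<Omega>_def by force
  have orbits_eq: "orbits (weyl G K) (fixset (lcosets K) \<phi> K) (weyl_act \<phi>) = {\<Omega>}"
    unfolding fix_eq orbits_def using orbit_eq KOm by auto
  have stab_eq: "stabilizer (weyl G K) (weyl_act \<phi>) s = {K}" if s: "s \<in> \<Omega>" for s
  proof -
    obtain a where a: "a \<in> N" "s = a <# K" using s by (auto simp: \<Omega>_def)
    have ac: "a \<in> carrier G" using Nc a by simp
    show ?thesis
    proof (intro equalityI subsetI)
      fix C assume "C \<in> stabilizer (weyl G K) (weyl_act \<phi>) s"
      then obtain n where n: "n \<in> N" "C = K #> n" "(SOME m. m \<in> K #> n) <# s = s"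
        by (auto simp: stabilizer_def Wc weyl_act_def \<phi>_def)
      obtain k where k: "k \<in> K" "(SOME m. m \<in> K #> n) = k \<otimes> n" using someC[OF n(1)] by blast
      define m where "m = k \<otimes> n"
      have kc: "k \<in> carrier G" using k Kc by auto
      have mc: "m \<in> carrier G" using kc Nc n by (simp add: m_def)
      have "a <# K = (m \<otimes> a) <# K" using n k a lcos_m_assoc[OF Kc mc ac] by (simp add: m_def)
      hence "inv a \<otimes> (m \<otimes> a) \<in> K" using lcos_eq_iff[OF K(1) ac] mc ac by simp
      hence "inv a \<otimes> m \<otimes> a \<in> K" using mc ac by (simp add: m_assoc)
      hence "a \<otimes> (inv a \<otimes> m \<otimes> a) \<otimes> inv a \<in> K" using Nconj[OF a(1)] by blast
      hence mK: "m \<in> K" using conj_cancel2[OF ac mc] by simp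
      have "n = inv k \<otimes> m" using kc Nc n by (simp add: m_def m_assoc[symmetric])
      hence "n \<in> K" using mK k K(1) subgroup.m_closed subgroup.m_inv_closed by metis
      hence "C = K" using n coset_join2[OF Nc[OF n(1)] K(1)] by simp
      thus "C \<in> {K}" by simp
    next
      fix C assume "C \<in> {K}"
      hence C: "C = K" by simp
      have KW: "K \<in> carrier (weyl G K)"
        using Wc oneN coset_join2[OF one_closed K(1) subgroup.one_closed[OF K(1)]] by auto
      obtain k where k: "k \<in> K" "(SOME m. m \<in> K #> \<one>) = k \<otimes> \<one>" using someC[OF oneN] by blast
      have kc: "k \<in> carrier G" using k Kc by auto
      have K1: "K #> \<one> = K" using coset_join2[OF one_closed K(1) subgroup.one_closed[OF K(1)]] .
      have "(SOME m. m \<in> K) = k" using k K1 kc by simp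
      hence "weyl_act \<phi> K s = (k \<otimes> a) <# K" using a lcos_m_assoc[OF Kc kc ac] by (simp add: weyl_act_def \<phi>_def)
      also have "\<dots> = a <# K"
      proof -
        have "inv a \<otimes> (k \<otimes> a) \<in> K" using Nconji[OF a(1) k(1)] kc ac by (simp add: m_assoc)
        thus ?thesis using lcos_eq_iff[OF K(1) ac, of "k \<otimes> a"] kc ac by (metis m_closed)
      qed
      finally show "C \<in> stabilizer (weyl G K) (weyl_act \<phi>) s" using C KW a by (simp add: stabilizer_def)
    qed
  qed
  have "(SOME s. s \<in> \<Omega>) \<in> \<Omega>" using KOm by (rule someI)
  hence "ch_hom G K K = 1"
    unfolding ch_hom_def chK_def \<phi>_def[symmetric] orbits_eq using stab_eq by simp
  thus ?thesis by simp
qed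

end



theorem lemma8p10:
  fixes G :: "('a, 'c) monoid_scheme"
  assumes "group G"
  shows "inj_on (chQ G) (burnside_Q G) \<and>
         (finite (fin_classes G) \<longrightarrow> bij_betw (chQ G) (burnside_Q G) (prod_Q G))"
proof -
  interpret group G by fact
  define F where "F = fin_classes G"
  define R where "R = (\<lambda>c::'a set set. SOME K. K \<in> c)"
  define M where "M = (\<lambda>c d. ch_hom G (R c) (R d))"
  define w where "w = (\<lambda>c. card (R c))"
  have rep: "\<And>c. c \<in> F \<Longrightarrow> R c \<in> c \<and> subgroup (R c) G \<and> finite (R c) \<and> c = conjclass G (R c)"
    unfolding F_def R_def by (rule fin_classes_rep)
  have diag: "\<And>c. c \<in> F \<Longrightarrow> M c c \<noteq> 0" using rep ch_self by (simp add: M_def)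
  have tri: "\<And>c d. c \<in> F \<Longrightarrow> d \<in> F \<Longrightarrow> c \<noteq> d \<Longrightarrow> M c d \<noteq> 0 \<Longrightarrow> w c < w d"
  proof -
    fix c d assume c: "c \<in> F" and d: "d \<in> F" and cd: "c \<noteq> d" and M: "M c d \<noteq> 0"
    have Rc: "subgroup (R c) G" "finite (R c)" and Rd: "subgroup (R d) G" "finite (R d)"
      using rep c d by auto
    have Rcc: "R c \<subseteq> carrier G" using Rc subgroup.subset by blast
    obtain a where a: "a \<in> carrier G" "\<forall>k\<in>R c. inv\<^bsub>G\<^esub> a \<otimes>\<^bsub>G\<^esub> k \<otimes>\<^bsub>G\<^esub> a \<in> R d"
      using ch_nonzero_fix[OF Rd(1) Rcc] M by (auto simp: M_def)
    define f where "f = (\<lambda>h. inv\<^bsub>G\<^esub> a \<otimes>\<^bsub>G\<^esub> h \<otimes>\<^bsub>G\<^esub> inv\<^bsub>G\<^esub> (inv\<^bsub>G\<^esub> a))"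
    have inj: "inj_on f (R c)" unfolding f_def by (rule conj_inj[OF Rcc inv_closed[OF a(1)]])
    have sub: "f ` R c \<subseteq> R d" using a by (auto simp: f_def)
    have le: "card (R c) \<le> card (R d)"
      using card_mono[OF Rd(2) sub] card_image[OF inj] by simp
    have "card (R c) \<noteq> card (R d)"
    proof
      assume eq: "card (R c) = card (R d)"
      have "f ` R c = R d" using card_subset_eq[OF Rd(2) sub] card_image[OF inj] eq by simp
      hence "conjclass G (R d) = conjclass G (R c)"
        using conjclass_conj[OF Rcc, of "inv\<^bsub>G\<^esub> a"] a by (simp add: f_def)
      thus False using rep c d cd by metis
    qed
    thus "w c < w d" using le by (simp add: w_def)
  qed
  have BF: "\<And>x d. x \<in> burnside_Q G \<Longrightarrow> x d \<noteq> 0 \<Longrightarrow> d \<in> F"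
    by (auto simp: burnside_Q_def F_def)
  have chQ_eq: "\<And>x c S. x \<in> burnside_Q G \<Longrightarrow> c \<in> F \<Longrightarrow> finite S \<Longrightarrow> {d. x d \<noteq> 0} \<subseteq> S \<Longrightarrow>
      chQ G x c = (\<Sum>d\<in>S. x d * M c d)"
  proof -
    fix x c and S :: "'a set set set"
    assume x: "x \<in> burnside_Q G" and c: "c \<in> F" and S: "finite S" "{d. x d \<noteq> 0} \<subseteq> S"
    have "chQ G x c = (\<Sum>d\<in>{d. x d \<noteq> 0}. x d * M c d)"
      using c by (simp add: chQ_def F_def M_def R_def)
    also have "\<dots> = (\<Sum>d\<in>S. x d * M c d)"
      by (rule sum.mono_neutral_left) (use S in auto)
    finally show "chQ G x c = (\<Sum>d\<in>S. x d * M c d)" .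
  qed
  have inj: "inj_on (chQ G) (burnside_Q G)"
  proof (rule inj_onI)
    fix x x' assume x: "x \<in> burnside_Q G" and x': "x' \<in> burnside_Q G" and eq: "chQ G x = chQ G x'"
    define S where "S = {d. x d \<noteq> 0} \<union> {d. x' d \<noteq> 0}"
    have Sfin: "finite S" using x x' by (simp add: S_def burnside_Q_def)
    have SF: "S \<subseteq> F" using BF x x' by (auto simp: S_def)
    have "\<forall>d\<in>S. x d - x' d = 0"
    proof (rule tri_inj[OF Sfin SF tri diag])
      fix c assume c: "c \<in> F"
      have "(\<Sum>d\<in>S. (x d - x' d) * M c d) = (\<Sum>d\<in>S. x d * M c d) - (\<Sum>d\<in>S. x' d * M c d)"
        by (simp add: left_diff_distrib sum_subtractf)
      also have "\<dots> = chQ G x c - chQ G x' c"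
        using chQ_eq[OF x c Sfin] chQ_eq[OF x' c Sfin] by (auto simp: S_def)
      finally show "(\<Sum>d\<in>S. (x d - x' d) * M c d) = 0" using eq by simp
    qed
    note z = this
    show "x = x'"
    proof
      fix d show "x d = x' d"
      proof (cases "d \<in> S")
        case True thus ?thesis using z by simp
      next
        case False thus ?thesis by (simp add: S_def)
      qed
    qed
  qed
  moreover have "finite (fin_classes G) \<longrightarrow> bij_betw (chQ G) (burnside_Q G) (prod_Q G)"
  proof
    assume fin: "finite (fin_classes G)"
    hence finF: "finite F" by (simp add: F_def)
    have "chQ G ` burnside_Q G = prod_Q G"
    proof (intro equalityI subsetI)
      fix y assume "y \<in> chQ G ` burnside_Q G"
      thus "y \<in> prod_Q G" by (auto simp: prod_Q_def chQ_def)
    next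
      fix y assume y: "y \<in> prod_Q G"
      obtain x where x: "\<forall>d. d \<notin> F \<longrightarrow> x d = 0" "\<forall>c\<in>F. (\<Sum>d\<in>F. x d * M c d) = y c"
        using tri_surj[where F=F and M=M and w=w and y=y, OF finF tri diag] by blast
      have sub: "{d. x d \<noteq> 0} \<subseteq> F" using x(1) by auto
      have xB: "x \<in> burnside_Q G"
        using x(1) finite_subset[OF sub finF] by (auto simp: burnside_Q_def F_def)
      have "chQ G x = y"
      proof
        fix c show "chQ G x c = y c"
        proof (cases "c \<in> F")
          case True thus ?thesis using chQ_eq[OF xB True finF sub] x(2) by simp
        next
          case False thus ?thesis using y by (simp add: chQ_def prod_Q_def F_def)
        qed
      qed
      thus "y \<in> chQ G ` burnside_Q G" using xB by blast
    qed
    thus "bij_betw (chQ G) (burnside_Q G) (prod_Q G)" using inj by (simp add: bij_betw_def)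
  qed
  ultimately show ?thesis by blast
qed

end
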